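(* Let $G$ be a finite non-abelian group with $G/Z(G)\cong\mathbb{Z}_p\times\mathbb{Z}_p$ for a prime $p$. Then $\Gamma_G$ is neither hyperenergetic, L-hyperenergetic nor Q-hyperenergetic.
   Context: The NCCC-graph $\Gamma_G$ of a finite non-abelian group $G$ with center $Z(G)$ has vertex set $\{x^G: x\in G\setminus Z(G)\}$ ($x^G$ the conjugacy class of $x$), distinct vertices $x^G,y^G$ adjacent iff $x'y'\neq y'x'$ for all $x'\in x^G,y'\in y^G$. For a simple graph $\mathcal G$ with adjacency matrix $A$, degree matrix $D$, $L=D-A$, $Q=D+A$: $E(\mathcal G)=\sum|\lambda|$ over eigenvalues of $A$; with $\Delta=2|E(\mathcal G)|/|V(\mathcal G)|$, $LE(\mathcal G)=\sum|\beta-\Delta|$ over eigenvalues $\beta$ of $L$, $SE(\mathcal G)=\sum|\gamma-\Delta|$ over eigenvalues $\gamma$ of $Q$ (with multiplicity). For $N=|V(\mathcal G)|$ and $K_N$ the complete graph, $E(K_N)=LE(K_N)=SE(K_N)=2(N-1)$. $\mathcal G$ is hyperenergetic if $E(\mathcal G)>E(K_N)$, L-hyperenergetic if $LE(\mathcal G)>LE(K_N)$, Q-hyperenergetic if $SE(\mathcal G)>SE(K_N)$. *)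

theory Defs
  imports "HOL-Algebra.Elementary_Groups" "HOL-Algebra.Coset" "Jordan_Normal_Form.Char_Poly"
    "HOL-Computational_Algebra.Polynomial"
begin

definition grp_center :: "('a, 'b) monoid_scheme \<Rightarrow> 'a set" where
  "grp_center G = {z \<in> carrier G. \<forall>x \<in> carrier G. z \<otimes>\<^bsub>G\<^esub> x = x \<otimes>\<^bsub>G\<^esub> z}"

definition conj_class :: "('a, 'b) monoid_scheme \<Rightarrow> 'a \<Rightarrow> 'a set" where
  "conj_class G x = {g \<otimes>\<^bsub>G\<^esub> x \<otimes>\<^bsub>G\<^esub> inv\<^bsub>G\<^esub> g | g. g \<in> carrier G}"

definition nccc_vertices :: "('a, 'b) monoid_scheme \<Rightarrow> 'a set set" where
  "nccc_vertices G = {conj_class G x | x. x \<in> carrier G - grp_center G}"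

definition nccc_adj :: "('a, 'b) monoid_scheme \<Rightarrow> 'a set \<Rightarrow> 'a set \<Rightarrow> bool" where
  "nccc_adj G X Y \<longleftrightarrow> X \<in> nccc_vertices G \<and> Y \<in> nccc_vertices G \<and> X \<noteq> Y \<and>
     (\<forall>x' \<in> X. \<forall>y' \<in> Y. x' \<otimes>\<^bsub>G\<^esub> y' \<noteq> y' \<otimes>\<^bsub>G\<^esub> x')"

text \<open>A simple graph is given by a finite vertex set V and a symmetric irreflexive
  relation E. Matrices are built w.r.t. a fixed enumeration of V (the spectra do not
  depend on this choice).\<close>

definition vert_enum :: "'v set \<Rightarrow> nat \<Rightarrow> 'v" where
  "vert_enum V = (SOME f. bij_betw f {0..<card V} V)"

definition graph_degree :: "'v set \<Rightarrow> ('v \<Rightarrow> 'v \<Rightarrow> bool) \<Rightarrow> 'v \<Rightarrow> nat" where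
  "graph_degree V E v = card {w \<in> V. E v w}"

definition adjacency_matrix :: "'v set \<Rightarrow> ('v \<Rightarrow> 'v \<Rightarrow> bool) \<Rightarrow> real mat" where
  "adjacency_matrix V E = mat (card V) (card V)
     (\<lambda>(i, j). if E (vert_enum V i) (vert_enum V j) then 1 else 0)"

definition degree_matrix :: "'v set \<Rightarrow> ('v \<Rightarrow> 'v \<Rightarrow> bool) \<Rightarrow> real mat" where
  "degree_matrix V E = mat (card V) (card V)
     (\<lambda>(i, j). if i = j then real (graph_degree V E (vert_enum V i)) else 0)"

definition laplacian_matrix :: "'v set \<Rightarrow> ('v \<Rightarrow> 'v \<Rightarrow> bool) \<Rightarrow> real mat" where
  "laplacian_matrix V E = degree_matrix V E - adjacency_matrix V E"

definition signless_laplacian_matrix :: "'v set \<Rightarrow> ('v \<Rightarrow> 'v \<Rightarrow> bool) \<Rightarrow> real mat" where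
  "signless_laplacian_matrix V E = degree_matrix V E + adjacency_matrix V E"

definition eigenvalues_mset :: "real mat \<Rightarrow> complex multiset" where
  "eigenvalues_mset M = proots (char_poly (map_mat complex_of_real M))"

definition num_edges :: "'v set \<Rightarrow> ('v \<Rightarrow> 'v \<Rightarrow> bool) \<Rightarrow> nat" where
  "num_edges V E = card {{v, w} | v w. v \<in> V \<and> w \<in> V \<and> E v w}"

definition avg_degree :: "'v set \<Rightarrow> ('v \<Rightarrow> 'v \<Rightarrow> bool) \<Rightarrow> real" where
  "avg_degree V E = 2 * real (num_edges V E) / real (card V)"

definition graph_energy :: "'v set \<Rightarrow> ('v \<Rightarrow> 'v \<Rightarrow> bool) \<Rightarrow> real" where
  "graph_energy V E = (\<Sum>\<mu>\<in>#eigenvalues_mset (adjacency_matrix V E). cmod \<mu>)"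

definition laplacian_energy :: "'v set \<Rightarrow> ('v \<Rightarrow> 'v \<Rightarrow> bool) \<Rightarrow> real" where
  "laplacian_energy V E = (\<Sum>\<beta>\<in>#eigenvalues_mset (laplacian_matrix V E).
      cmod (\<beta> - complex_of_real (avg_degree V E)))"

definition signless_laplacian_energy :: "'v set \<Rightarrow> ('v \<Rightarrow> 'v \<Rightarrow> bool) \<Rightarrow> real" where
  "signless_laplacian_energy V E = (\<Sum>\<gamma>\<in>#eigenvalues_mset (signless_laplacian_matrix V E).
      cmod (\<gamma> - complex_of_real (avg_degree V E)))"

text \<open>E(K_N) = LE(K_N) = SE(K_N) = 2(N-1).\<close>
definition hyperenergetic :: "'v set \<Rightarrow> ('v \<Rightarrow> 'v \<Rightarrow> bool) \<Rightarrow> bool" where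
  "hyperenergetic V E \<longleftrightarrow> graph_energy V E > 2 * (real (card V) - 1)"

definition L_hyperenergetic :: "'v set \<Rightarrow> ('v \<Rightarrow> 'v \<Rightarrow> bool) \<Rightarrow> bool" where
  "L_hyperenergetic V E \<longleftrightarrow> laplacian_energy V E > 2 * (real (card V) - 1)"

definition Q_hyperenergetic :: "'v set \<Rightarrow> ('v \<Rightarrow> 'v \<Rightarrow> bool) \<Rightarrow> bool" where
  "Q_hyperenergetic V E \<longleftrightarrow> signless_laplacian_energy V E > 2 * (real (card V) - 1)"

end

theory Submission
  imports Defs "HOL-Number_Theory.Cong" "HOL-Algebra.Group_Action"
    "Jordan_Normal_Form.Schur_Decomposition"
begin

lemma blk_sum:
  fixes v :: "nat \<Rightarrow> complex" and g :: "nat \<Rightarrow> 'c"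
  assumes blk: "\<forall>i<n. card {j. j < n \<and> g j = g i} = m"
  shows "(\<Sum>i<n. (\<Sum>j<n. if g j = g i then v j else 0)) = of_nat m * (\<Sum>j<n. v j)"
proof -
  have "(\<Sum>i<n. (\<Sum>j<n. if g j = g i then v j else 0)) = (\<Sum>j<n. (\<Sum>i<n. if g j = g i then v j else 0))"
    by (rule sum.swap)
  also have "\<dots> = (\<Sum>j<n. of_nat m * v j)"
  proof (rule sum.cong[OF refl])
    fix j assume j: "j \<in> {..<n}"
    have "(\<Sum>i<n. if g j = g i then v j else 0) = (\<Sum>i\<in>{i. i<n \<and> g i = g j}. v j)"
      by (rule sum.mono_neutral_cong_right) auto
    also have "\<dots> = of_nat m * v j" using blk j by auto
    finally show "(\<Sum>i<n. if g j = g i then v j else 0) = of_nat m * v j" .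
  qed
  also have "\<dots> = of_nat m * (\<Sum>j<n. v j)" by (simp add: sum_distrib_left)
  finally show ?thesis .
qed

lemma eig_cases:
  fixes v :: "nat \<Rightarrow> complex" and g :: "nat \<Rightarrow> 'c" and t :: complex
  assumes blk: "\<forall>i<n. card {j. j < n \<and> g j = g i} = m"
    and eig: "\<forall>i<n. (\<Sum>j<n. (if g i \<noteq> g j then 1 else 0) * v j) = t * v i"
    and nz: "i0 < n" "v i0 \<noteq> 0"
  shows "t = of_nat n - of_nat m \<or> t = 0 \<or> t = - of_nat m"
proof -
  define S where "S = (\<Sum>j<n. v j)"
  define b where "b i = (\<Sum>j<n. if g j = g i then v j else 0)" for i
  have split: "(\<Sum>j<n. (if g i \<noteq> g j then 1 else 0) * v j) = S - b i" for i
  proof -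
    have "S = (\<Sum>j<n. (if g i \<noteq> g j then 1 else 0) * v j) + b i"
      unfolding S_def b_def sum.distrib[symmetric] by (rule sum.cong) auto
    thus ?thesis by simp
  qed
  have e2: "\<forall>i<n. S - b i = t * v i" using eig split by simp
  have "(\<Sum>i<n. S - b i) = t * S"
    using e2 by (simp add: S_def sum_distrib_left)
  moreover have "(\<Sum>i<n. S - b i) = of_nat n * S - of_nat m * S"
    using blk_sum[OF blk, of v] by (simp add: sum_subtractf b_def S_def)
  ultimately have "(of_nat n - of_nat m - t) * S = 0" by (simp add: algebra_simps)
  hence "t = of_nat n - of_nat m \<or> S = 0" by auto
  moreover
  { assume S0: "S = 0" and tn: "t \<noteq> - of_nat m"
    have bz: "b i = 0" if i: "i < n" for i
    proof -
      have "(\<Sum>k<n. if g k = g i then - b k else 0) = (\<Sum>k<n. if g k = g i then t * v k else 0)"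
        using e2 S0 by (intro sum.cong) auto
      moreover have "(\<Sum>k<n. if g k = g i then - b k else 0) = (\<Sum>k<n. if g k = g i then - b i else 0)"
        unfolding b_def by (intro sum.cong) auto
      moreover have "(\<Sum>k<n. if g k = g i then - b i else 0) = - of_nat m * b i"
      proof -
        have "(\<Sum>k<n. if g k = g i then - b i else 0) = (\<Sum>k\<in>{k. k<n \<and> g k = g i}. - b i)"
          by (rule sum.mono_neutral_cong_right) auto
        thus ?thesis using blk i by simp
      qed
      moreover have "(\<Sum>k<n. if g k = g i then t * v k else 0) = t * b i"
        unfolding b_def sum_distrib_left by (intro sum.cong) auto
      ultimately have h: "- (of_nat m * b i) = t * b i" by simp
      have "(t + of_nat m) * b i = t * b i + of_nat m * b i" by (simp add: distrib_right)
      also have "\<dots> = 0" using h[symmetric] by simp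
      finally have "(t + of_nat m) * b i = 0" .
      thus ?thesis using tn by (auto simp: add_eq_0_iff)
    qed
    have "S - b i0 = t * v i0" using e2 nz by blast
    hence "t * v i0 = 0" using S0 bz[OF nz(1)] by simp
    hence "t = 0" using nz by simp
  }
  ultimately show ?thesis by blast
qed

definition mtr :: "'a::comm_ring_1 mat \<Rightarrow> 'a" where
  "mtr M = (\<Sum>i<dim_row M. M $$ (i,i))"

lemma mult_entry: assumes "A \<in> carrier_mat n k" "B \<in> carrier_mat k n'" "i < n" "j < n'"
  shows "(A * B) $$ (i,j) = (\<Sum>l<k. A $$ (i,l) * B $$ (l,j))"
proof -
  have "(A * B) $$ (i,j) = row A i \<bullet> col B j" using assms by simp
  also have "\<dots> = (\<Sum>l \<in> {0..<k}. row A i $ l * col B j $ l)" using assms unfolding scalar_prod_def by simp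
  also have "\<dots> = (\<Sum>l<k. A $$ (i,l) * B $$ (l,j))" using assms by (auto simp: lessThan_atLeast0 intro!: sum.cong)
  finally show ?thesis .
qed

lemma mult_entry': assumes "A \<in> carrier_mat n k" "B \<in> carrier_mat k n'" "i < n" "j < n'"
  shows "row A i \<bullet> col B j = (\<Sum>l<k. A $$ (i,l) * B $$ (l,j))"
  using mult_entry[OF assms] assms by simp

lemma mtr_comm: fixes A B :: "'a::comm_ring_1 mat"
  assumes A: "A \<in> carrier_mat n k" and B: "B \<in> carrier_mat k n"
  shows "mtr (A * B) = mtr (B * A)"
proof -
  have "mtr (A * B) = (\<Sum>i<n. \<Sum>l<k. A $$ (i,l) * B $$ (l,i))"
    unfolding mtr_def using A B by (intro sum.cong) (auto simp: mult_entry'[OF A B])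
  also have "\<dots> = (\<Sum>l<k. \<Sum>i<n. B $$ (l,i) * A $$ (i,l))"
    by (subst sum.swap) (simp add: mult.commute)
  also have "\<dots> = mtr (B * A)"
    unfolding mtr_def using A B by (intro sum.cong) (auto simp: mult_entry'[OF B A])
  finally show ?thesis .
qed

lemma mtr_sim: fixes X P Q :: "'a::comm_ring_1 mat"
  assumes "X \<in> carrier_mat n n" "P \<in> carrier_mat n n" "Q \<in> carrier_mat n n" "Q * P = 1\<^sub>m n"
  shows "mtr (P * X * Q) = mtr X"
proof -
  have "mtr (P * X * Q) = mtr (P * (X * Q))" using assms by (simp add: assoc_mult_mat)
  also have "\<dots> = mtr ((X * Q) * P)" using assms by (intro mtr_comm) auto
  also have "\<dots> = mtr (X * (Q * P))" using assms by (simp add: assoc_mult_mat)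
  also have "\<dots> = mtr X" using assms by simp
  finally show ?thesis .
qed

lemma ut_sq_diag: fixes T :: "'a::comm_ring_1 mat"
  assumes T: "T \<in> carrier_mat n n" and ut: "upper_triangular T" and i: "i < n"
  shows "(T * T) $$ (i,i) = T $$ (i,i) * T $$ (i,i)"
proof -
  have "(T * T) $$ (i,i) = (\<Sum>l<n. T $$ (i,l) * T $$ (l,i))" by (rule mult_entry[OF T T i i])
  also have "\<dots> = (\<Sum>l\<in>{i}. T $$ (i,l) * T $$ (l,i))"
  proof (rule sum.mono_neutral_right)
    show "\<forall>l\<in>{..<n} - {i}. T $$ (i, l) * T $$ (l, i) = 0"
    proof
      fix l assume l: "l \<in> {..<n} - {i}"
      show "T $$ (i, l) * T $$ (l, i) = 0"
      proof (cases "l < i")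
        case True then show ?thesis using ut T i unfolding upper_triangular_def by auto
      next
        case False then have "i < l" using l by auto
        then show ?thesis using ut T l unfolding upper_triangular_def by auto
      qed
    qed
  qed (use i in auto)
  finally show ?thesis by simp
qed

lemma sim_affine:
  fixes A T P Q :: "complex mat"
  assumes "similar_mat_wit A T P Q" "A \<in> carrier_mat n n"
  shows "similar_mat_wit (c \<cdot>\<^sub>m 1\<^sub>m n + s \<cdot>\<^sub>m A) (c \<cdot>\<^sub>m 1\<^sub>m n + s \<cdot>\<^sub>m T) P Q"
proof -
  from assms have c: "T \<in> carrier_mat n n" "P \<in> carrier_mat n n" "Q \<in> carrier_mat n n"
    and PQ: "P * Q = 1\<^sub>m n" "Q * P = 1\<^sub>m n" and A: "A = P * T * Q"
    unfolding similar_mat_wit_def Let_def by auto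
  have "P * (c \<cdot>\<^sub>m 1\<^sub>m n + s \<cdot>\<^sub>m T) = P * (c \<cdot>\<^sub>m 1\<^sub>m n) + P * (s \<cdot>\<^sub>m T)"
    using c by (intro mult_add_distrib_mat[of _ n n]) auto
  hence "P * (c \<cdot>\<^sub>m 1\<^sub>m n + s \<cdot>\<^sub>m T) * Q = P * (c \<cdot>\<^sub>m 1\<^sub>m n) * Q + P * (s \<cdot>\<^sub>m T) * Q"
    using c by (simp add: add_mult_distrib_mat[of _ n n])
  also have "P * (c \<cdot>\<^sub>m 1\<^sub>m n) * Q = c \<cdot>\<^sub>m (P * Q)"
  proof -
    have "P * (c \<cdot>\<^sub>m 1\<^sub>m n) = c \<cdot>\<^sub>m P" using mult_smult_distrib[of P n n "1\<^sub>m n" n c] c by simp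
    thus ?thesis using mult_smult_assoc_mat[of P n n Q n c] c by simp
  qed
  also have "P * (s \<cdot>\<^sub>m T) * Q = s \<cdot>\<^sub>m (P * T * Q)"
  proof -
    have "P * (s \<cdot>\<^sub>m T) = s \<cdot>\<^sub>m (P * T)" using mult_smult_distrib[of P n n T n s] c by simp
    thus ?thesis using mult_smult_assoc_mat[of "P * T" n n Q n s] c by simp
  qed
  finally have "P * (c \<cdot>\<^sub>m 1\<^sub>m n + s \<cdot>\<^sub>m T) * Q = c \<cdot>\<^sub>m 1\<^sub>m n + s \<cdot>\<^sub>m A"
    using PQ A by simp
  then show ?thesis using c PQ assms(2) unfolding similar_mat_wit_def Let_def by auto
qed

lemma matrix_spec:
  fixes g :: "nat \<Rightarrow> 'c" and n m :: nat
  assumes blk: "\<forall>i<n. card {j. j<n \<and> g j = g i} = m"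
    and A_def: "A = mat n n (\<lambda>(i,j). if g i \<noteq> g j then (1::complex) else 0)"
  obtains T P Q where "similar_mat_wit A T P Q" "T \<in> carrier_mat n n" "upper_triangular T"
    "\<forall>i<n. T$$(i,i) = of_nat n - of_nat m \<or> T$$(i,i) = 0 \<or> T$$(i,i) = - of_nat m"
    "(\<Sum>i<n. T$$(i,i)) = 0"
    "(\<Sum>i<n. T$$(i,i) * T$$(i,i)) = of_nat n * (of_nat n - of_nat m)"
proof -
  have A: "A \<in> carrier_mat n n" unfolding A_def by simp
  obtain as where cp: "char_poly A = (\<Prod>a\<leftarrow>as. [:- a, 1:])" "length as = n"
    using char_poly_factorized[OF A] by blast
  obtain T P Q where sd: "schur_decomposition A as = (T,P,Q)" by (cases "schur_decomposition A as") auto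
  from schur_decomposition[OF A cp(1) sd] have sw: "similar_mat_wit A T P Q"
    and ut: "upper_triangular T" and dg: "diag_mat T = as" by auto
  from sw A have T: "T \<in> carrier_mat n n" and P: "P \<in> carrier_mat n n" and Q: "Q \<in> carrier_mat n n"
    and QP: "Q * P = 1\<^sub>m n" and PQ: "P * Q = 1\<^sub>m n" and APTQ: "A = P * T * Q"
    unfolding similar_mat_wit_def Let_def by auto
  have blkc: "card {j. j<n \<and> g i \<noteq> g j} = n - m" if i: "i < n" for i
  proof -
    have "{j. j<n \<and> g i \<noteq> g j} = {..<n} - {j. j<n \<and> g j = g i}" by auto
    moreover have "card ({..<n} - {j. j<n \<and> g j = g i}) = n - m"
      using blk i by (subst card_Diff_subset) auto
    ultimately show ?thesis by simp
  qed
  have ev: "T$$(i,i) = of_nat n - of_nat m \<or> T$$(i,i) = 0 \<or> T$$(i,i) = - of_nat m" if i: "i < n" for i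
  proof -
    define t where "t = T$$(i,i)"
    have "t \<in> set as" using dg i T unfolding t_def diag_mat_def by auto
    hence "poly (char_poly A) t = 0" unfolding cp(1) poly_prod_list prod_list_zero_iff by force
    hence "eigenvalue A t" using eigenvalue_root_char_poly[OF A] by simp
    then obtain v where v: "eigenvector A v t" unfolding eigenvalue_def by blast
    hence vc: "v \<in> carrier_vec n" and vnz: "v \<noteq> 0\<^sub>v n" and Av: "A *\<^sub>v v = t \<cdot>\<^sub>v v"
      unfolding eigenvector_def using A by auto
    obtain i0 where i0: "i0 < n" "v $ i0 \<noteq> 0"
    proof -
      have "\<exists>i0<n. v $ i0 \<noteq> 0"
      proof (rule ccontr)
        assume "\<not> ?thesis"
        hence "v = 0\<^sub>v n" using vc by (intro eq_vecI) auto
        thus False using vnz by simp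
      qed
      thus ?thesis using that by blast
    qed
    have eig: "\<forall>k<n. (\<Sum>j<n. (if g k \<noteq> g j then 1 else 0) * v $ j) = t * v $ k"
    proof (intro allI impI)
      fix k assume k: "k < n"
      have "(A *\<^sub>v v) $ k = t * v $ k" using Av k vc by simp
      moreover have "(A *\<^sub>v v) $ k = (\<Sum>j<n. (if g k \<noteq> g j then 1 else 0) * v $ j)"
        using k vc unfolding A_def by (auto simp: scalar_prod_def lessThan_atLeast0 intro!: sum.cong)
      ultimately show "(\<Sum>j<n. (if g k \<noteq> g j then 1 else 0) * v $ j) = t * v $ k" by simp
    qed
    show ?thesis using eig_cases[OF blk eig i0] unfolding t_def .
  qed
  have "mtr A = mtr T" using mtr_sim[OF T P Q QP] APTQ by simp
  moreover have "mtr A = 0" unfolding mtr_def A_def by simp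
  ultimately have tr1: "(\<Sum>i<n. T$$(i,i)) = 0" unfolding mtr_def using T by simp
  have "A * A = P * (T * T) * Q"
  proof -
    have "A * A = (P * T * Q) * (P * T * Q)" using APTQ by simp
    also have "\<dots> = P * T * (Q * P) * T * Q" using P T Q by (simp add: assoc_mult_mat[of _ n n _ n _ n])
    also have "\<dots> = P * (T * T) * Q" using P T Q QP by (simp add: assoc_mult_mat[of _ n n _ n _ n])
    finally show ?thesis .
  qed
  hence "mtr (A * A) = mtr (T * T)" using mtr_sim[of "T * T" n P Q] T P Q QP by simp
  moreover have "mtr (T * T) = (\<Sum>i<n. T$$(i,i) * T$$(i,i))"
    unfolding mtr_def using T ut_sq_diag[OF T ut] by simp
  moreover have "mtr (A * A) = of_nat n * (of_nat n - of_nat m)"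
  proof -
    have "mtr (A * A) = (\<Sum>i<n. \<Sum>j<n. A $$ (i,j) * A $$ (j,i))"
      unfolding mtr_def using A by (intro sum.cong) (auto simp: mult_entry'[OF A A])
    also have "\<dots> = (\<Sum>i<n. of_nat (n - m))"
    proof (rule sum.cong[OF refl])
      fix i assume i: "i \<in> {..<n}"
      have "(\<Sum>j<n. A $$ (i,j) * A $$ (j,i)) = (\<Sum>j<n. if g i \<noteq> g j then 1 else 0)"
        using i unfolding A_def by (intro sum.cong) auto
      also have "\<dots> = (\<Sum>j\<in>{j. j<n \<and> g i \<noteq> g j}. 1)"
        by (rule sum.mono_neutral_cong_right) auto
      also have "\<dots> = of_nat (n - m)" using blkc i by simp
      finally show "(\<Sum>j<n. A $$ (i,j) * A $$ (j,i)) = of_nat (n - m)" .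
    qed
    also have "\<dots> = of_nat n * (of_nat n - of_nat m :: complex)"
    proof (cases "n = 0")
      case False
      then have "m \<le> n" using blk card_mono[of "{..<n}" "{j. j<n \<and> g j = g 0}"] by force
      thus ?thesis by (simp add: of_nat_diff)
    qed simp
    finally show ?thesis .
  qed
  ultimately have tr2: "(\<Sum>i<n. T$$(i,i) * T$$(i,i)) = of_nat n * (of_nat n - of_nat m)" by simp
  show ?thesis using that[OF sw T ut _ tr1 tr2] ev by blast
qed

lemma energy_bound:
  fixes r :: "nat \<Rightarrow> complex" and n m :: nat
  assumes m1: "1 \<le> m" and mn: "m \<le> n"
    and ev: "\<forall>i<n. r i = of_nat n - of_nat m \<or> r i = 0 \<or> r i = - of_nat m"
    and s1: "(\<Sum>i<n. r i) = 0"
    and s2: "(\<Sum>i<n. r i * r i) = of_nat n * (of_nat n - of_nat m)"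
  shows "(\<Sum>i<n. cmod (r i)) \<le> 2 * (real n - 1)"
proof -
  define d where "d = real n - real m"
  have d0: "d \<ge> 0" using mn unfolding d_def by simp
  define x where "x i = Re (r i)" for i
  have rx: "r i = complex_of_real (x i)" if "i < n" for i
    using ev that unfolding x_def d_def by (auto simp: complex_eq_iff)
  have xv: "x i = d \<or> x i = 0 \<or> x i = - real m" if "i < n" for i
    using ev that unfolding x_def d_def by auto
  define a where "a = (\<Sum>i<n. if x i = d then 1 else 0 :: real)"
  have sx: "(\<Sum>i<n. x i) = 0"
  proof -
    have "complex_of_real (\<Sum>i<n. x i) = (\<Sum>i<n. r i)" unfolding of_real_sum using rx by simp
    hence "complex_of_real (\<Sum>i<n. x i) = 0" using s1 by simp
    thus ?thesis by (simp only: of_real_eq_0_iff)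
  qed
  have sxx: "(\<Sum>i<n. x i * x i) = real n * d"
  proof -
    have "complex_of_real (\<Sum>i<n. x i * x i) = (\<Sum>i<n. r i * r i)" unfolding of_real_sum using rx by simp
    moreover have "of_nat n * (of_nat n - of_nat m) = complex_of_real (real n * d)"
      unfolding d_def by simp
    ultimately show ?thesis using s2 by (metis of_real_eq_iff)
  qed
  have e1: "cmod (r i) = 2 * d * (if x i = d then 1 else 0) - x i" if i: "i < n" for i
    using xv[OF i] rx[OF i] d0 m1 unfolding d_def by auto
  have e2: "x i * x i + real m * x i = real n * d * (if x i = d then 1 else 0)" if i: "i < n" for i
  proof (cases "x i = d")
    case True
    show ?thesis unfolding True d_def by (simp add: algebra_simps)
  next
    case False
    then have "x i = 0 \<or> x i = - real m" using xv[OF i] by auto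
    then show ?thesis using False by auto
  qed
  have E: "(\<Sum>i<n. cmod (r i)) = 2 * d * a"
    using e1 sx unfolding a_def by (simp add: sum_subtractf sum_distrib_left)
  have "(\<Sum>i<n. x i * x i + real m * x i) = real n * d * a"
    using e2 unfolding a_def by (simp add: sum_distrib_left)
  hence na: "real n * d = real n * d * a" using sx sxx by (simp add: sum.distrib sum_distrib_left[symmetric])
  show ?thesis
  proof (cases "d = 0")
    case True thus ?thesis using E m1 mn by simp
  next
    case False
    hence "n > 0" using mn m1 unfolding d_def by auto
    hence "a = 1" using na False by simp
    thus ?thesis using E m1 unfolding d_def by simp
  qed
qed

lemma num_edges_reg:
  fixes V :: "'v set"
  assumes fin: "finite V" and sym: "\<forall>v\<in>V. \<forall>w\<in>V. E v w \<longrightarrow> E w v"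
    and irr: "\<forall>v\<in>V. \<not> E v v" and deg: "\<forall>v\<in>V. graph_degree V E v = d"
  shows "2 * num_edges V E = card V * d"
proof -
  define Pr where "Pr = (SIGMA v:V. {w\<in>V. E v w})"
  define h where "h = (\<lambda>(v::'v,w). {v,w})"
  have finP: "finite Pr" unfolding Pr_def using fin by auto
  have cP: "card Pr = card V * d"
    unfolding Pr_def using fin deg by (simp add: graph_degree_def)
  have Ed: "{{v, w} | v w. v \<in> V \<and> w \<in> V \<and> E v w} = h ` Pr"
    unfolding Pr_def h_def by auto
  have "card Pr = (\<Sum>y\<in>h ` Pr. card {x \<in> Pr. h x = y})"
    using sum.image_gen[OF finP, of "\<lambda>_. (1::nat)" h] by simp
  also have "\<dots> = (\<Sum>y\<in>h ` Pr. 2)"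
  proof (rule sum.cong[OF refl])
    fix y assume "y \<in> h ` Pr"
    then obtain v w where vw: "(v,w) \<in> Pr" and y: "y = {v,w}" unfolding h_def by auto
    have vV: "v \<in> V" "w \<in> V" "E v w" using vw unfolding Pr_def by auto
    have "v \<noteq> w" using vV irr by auto
    have "{x \<in> Pr. h x = y} = {(v,w),(w,v)}"
      using vV sym unfolding Pr_def h_def y by (auto simp: doubleton_eq_iff)
    thus "card {x \<in> Pr. h x = y} = 2" using \<open>v \<noteq> w\<close> by simp
  qed
  also have "\<dots> = 2 * card (h ` Pr)" by simp
  finally show ?thesis unfolding num_edges_def Ed using cP by simp
qed

lemma eig_mset_affine:
  fixes A T P Q :: "complex mat"
  assumes sw: "similar_mat_wit A T P Q" and A: "A \<in> carrier_mat n n" and T: "T \<in> carrier_mat n n"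
    and ut: "upper_triangular T"
  shows "proots (char_poly (c \<cdot>\<^sub>m 1\<^sub>m n + s \<cdot>\<^sub>m A)) = mset (map (\<lambda>i. c + s * T$$(i,i)) [0..<n])"
proof -
  let ?T = "c \<cdot>\<^sub>m 1\<^sub>m n + s \<cdot>\<^sub>m T"
  have "similar_mat (c \<cdot>\<^sub>m 1\<^sub>m n + s \<cdot>\<^sub>m A) ?T"
    using sim_affine[OF sw A] unfolding similar_mat_def by blast
  hence "char_poly (c \<cdot>\<^sub>m 1\<^sub>m n + s \<cdot>\<^sub>m A) = char_poly ?T" by (rule char_poly_similar)
  also have "?T \<in> carrier_mat n n" using T by simp
  moreover have "upper_triangular ?T" using ut T unfolding upper_triangular_def by auto
  ultimately have "char_poly (c \<cdot>\<^sub>m 1\<^sub>m n + s \<cdot>\<^sub>m A) = (\<Prod>a\<leftarrow>diag_mat ?T. [:- a, 1:])"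
    using char_poly_upper_triangular by metis
  moreover have "diag_mat ?T = map (\<lambda>i. c + s * T$$(i,i)) [0..<n]"
    unfolding diag_mat_def using T by auto
  moreover have "proots (\<Prod>a\<leftarrow>xs. [:- a, 1:]) = mset xs" for xs :: "complex list"
  proof (induction xs)
    case (Cons a xs)
    have nz: "(\<Prod>b\<leftarrow>xs. [:- b, 1:]) \<noteq> (0::complex poly)" by (auto simp: prod_list_zero_iff)
    have "proots (\<Prod>b\<leftarrow>a#xs. [:- b, 1:]) = proots ([:- a, 1:] * (\<Prod>b\<leftarrow>xs. [:- b, 1:]))"
      by (simp only: prod_list.Cons list.map)
    also have "\<dots> = proots [:- a, 1:] + proots (\<Prod>b\<leftarrow>xs. [:- b, 1:])" using nz by (intro proots_mult) auto
    also have "proots [:- a, 1:] = {#a#}" using proots_linear_factor[of "-a"] by simp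
    finally show ?case using Cons by simp
  qed simp
  ultimately show ?thesis by (simp only:)
qed

lemma msum_upt: "(\<Sum>\<mu>\<in>#mset (map h [0..<n]). F \<mu>) = (\<Sum>i<n. F (h i))"
proof -
  have gen: "(\<Sum>\<mu>\<in>#mset ys. F \<mu>) = sum_list (map F ys)" for ys by (induction ys) auto
  have "(\<Sum>\<mu>\<in>#mset (map h [0..<n]). F \<mu>) = sum_list (map (F \<circ> h) [0..<n])"
    unfolding gen by simp
  also have "\<dots> = sum (F \<circ> h) (set [0..<n])" by (simp only: sum_set_upt_conv_sum_list_nat)
  finally show ?thesis by (simp add: atLeast0LessThan)
qed

lemma graph_main:
  fixes V :: "'v set" and E :: "'v \<Rightarrow> 'v \<Rightarrow> bool" and f :: "'v \<Rightarrow> 'c" and m :: nat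
  assumes fin: "finite V" and ne: "V \<noteq> {}" and blk: "\<forall>v\<in>V. card {w\<in>V. f w = f v} = m"
    and adj: "\<forall>v\<in>V. \<forall>w\<in>V. E v w \<longleftrightarrow> f v \<noteq> f w"
  shows "\<not> hyperenergetic V E \<and> \<not> L_hyperenergetic V E \<and> \<not> Q_hyperenergetic V E"
proof -
  define n where "n = card V"
  define e where "e = vert_enum V"
  have bij: "bij_betw e {0..<n} V"
    unfolding e_def vert_enum_def n_def using someI_ex[OF ex_bij_betw_nat_finite[OF fin]] .
  have eV: "e i \<in> V" if "i < n" for i using bij that by (auto simp: bij_betw_def)
  have inj: "inj_on e {0..<n}" using bij by (auto simp: bij_betw_def)
  have n0: "0 < n" using fin ne unfolding n_def by (simp add: card_gt_0_iff)
  define g where "g i = f (e i)" for i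
  have blk': "\<forall>i<n. card {j. j<n \<and> g j = g i} = m"
  proof (intro allI impI)
    fix i assume i: "i < n"
    have "{w\<in>V. f w = f (e i)} = e ` {j. j<n \<and> g j = g i}"
    proof
      show "{w\<in>V. f w = f (e i)} \<subseteq> e ` {j. j<n \<and> g j = g i}"
      proof
        fix w assume w: "w \<in> {w\<in>V. f w = f (e i)}"
        then obtain j where "j \<in> {0..<n}" "w = e j" using bij by (auto simp: bij_betw_def)
        thus "w \<in> e ` {j. j<n \<and> g j = g i}" using w unfolding g_def by auto
      qed
    qed (use eV g_def in auto)
    moreover have "card (e ` {j. j<n \<and> g j = g i}) = card {j. j<n \<and> g j = g i}"
      by (rule card_image) (rule inj_on_subset[OF inj], auto)
    ultimately show "card {j. j<n \<and> g j = g i} = m" using blk eV[OF i] by auto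
  qed
  have m1: "1 \<le> m"
  proof -
    obtain v where v: "v \<in> V" using ne by auto
    have "v \<in> {w\<in>V. f w = f v}" using v by simp
    hence "card {w\<in>V. f w = f v} \<noteq> 0" using fin by auto
    thus ?thesis using blk v by auto
  qed
  have mn: "m \<le> n"
  proof -
    obtain v where v: "v \<in> V" using ne by auto
    have "card {w\<in>V. f w = f v} \<le> card V" using fin by (intro card_mono) auto
    thus ?thesis using blk v unfolding n_def by auto
  qed
  have deg: "graph_degree V E v = n - m" if v: "v \<in> V" for v
  proof -
    have "{w\<in>V. E v w} = V - {w\<in>V. f w = f v}" using adj v by auto
    hence "card {w\<in>V. E v w} = card V - card {w\<in>V. f w = f v}" using fin by (simp add: card_Diff_subset)
    thus ?thesis unfolding graph_degree_def n_def using blk v by simp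
  qed
  have "2 * num_edges V E = card V * (n - m)"
    by (rule num_edges_reg[OF fin]) (use adj deg in auto)
  hence avg: "avg_degree V E = real (n - m)"
    unfolding avg_degree_def using n0 unfolding n_def
    by (metis (mono_tags, lifting) nonzero_mult_div_cancel_left of_nat_0_less_iff of_nat_mult of_nat_numeral order_less_irrefl)
  define A where "A = mat n n (\<lambda>(i,j). if g i \<noteq> g j then (1::complex) else 0)"
  have Ac: "A \<in> carrier_mat n n" unfolding A_def by simp
  obtain T P Q where sw: "similar_mat_wit A T P Q" and T: "T \<in> carrier_mat n n" and ut: "upper_triangular T"
    and ev: "\<forall>i<n. T$$(i,i) = of_nat n - of_nat m \<or> T$$(i,i) = 0 \<or> T$$(i,i) = - of_nat m"
    and s1: "(\<Sum>i<n. T$$(i,i)) = 0"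
    and s2: "(\<Sum>i<n. T$$(i,i) * T$$(i,i)) = of_nat n * (of_nat n - of_nat m)"
    using matrix_spec[OF blk' A_def] by blast
  have bound: "(\<Sum>i<n. cmod (T$$(i,i))) \<le> 2 * (real n - 1)"
    by (rule energy_bound[OF m1 mn ev s1 s2])
  have EA: "eigenvalues_mset M = mset (map (\<lambda>i. c + s * T$$(i,i)) [0..<n])"
    if "map_mat complex_of_real M = c \<cdot>\<^sub>m 1\<^sub>m n + s \<cdot>\<^sub>m A" for M c s
    unfolding eigenvalues_mset_def that by (rule eig_mset_affine[OF sw Ac T ut])
  have adjm: "map_mat complex_of_real (adjacency_matrix V E) = 0 \<cdot>\<^sub>m 1\<^sub>m n + 1 \<cdot>\<^sub>m A"
    by (rule eq_matI) (auto simp: adjacency_matrix_def A_def n_def[symmetric] e_def[symmetric] g_def adj eV)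
  have lapm: "map_mat complex_of_real (laplacian_matrix V E) = of_nat (n - m) \<cdot>\<^sub>m 1\<^sub>m n + (-1) \<cdot>\<^sub>m A"
    by (rule eq_matI) (auto simp: laplacian_matrix_def degree_matrix_def adjacency_matrix_def A_def
        n_def[symmetric] e_def[symmetric] g_def adj eV deg)
  have slm: "map_mat complex_of_real (signless_laplacian_matrix V E) = of_nat (n - m) \<cdot>\<^sub>m 1\<^sub>m n + 1 \<cdot>\<^sub>m A"
    by (rule eq_matI) (auto simp: signless_laplacian_matrix_def degree_matrix_def adjacency_matrix_def A_def
        n_def[symmetric] e_def[symmetric] g_def adj eV deg)
  have "graph_energy V E = (\<Sum>i<n. cmod (T$$(i,i)))"
    unfolding graph_energy_def EA[OF adjm] msum_upt by simp
  moreover have "laplacian_energy V E = (\<Sum>i<n. cmod (T$$(i,i)))"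
    unfolding laplacian_energy_def EA[OF lapm] msum_upt avg by simp
  moreover have "signless_laplacian_energy V E = (\<Sum>i<n. cmod (T$$(i,i)))"
    unfolding signless_laplacian_energy_def EA[OF slm] msum_upt avg by simp
  ultimately show ?thesis using bound unfolding hyperenergetic_def L_hyperenergetic_def Q_hyperenergetic_def n_def
    by simp
qed

lemma small_dvd_zero: fixes x P :: int
  assumes "P dvd x" "\<bar>x\<bar> < P" shows "x = 0"
  using assms dvd_imp_le_int by force

lemma la_inj:
  fixes u1 u2 v1 v2 :: int and p a b a' b' :: nat
  assumes pp: "prime p"
    and ur: "0 \<le> u1" "u1 < int p" "0 \<le> u2" "u2 < int p" and vr: "0 \<le> v1" "v1 < int p" "0 \<le> v2" "v2 < int p"
    and unz: "(u1, u2) \<noteq> (0, 0)"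
    and nv: "\<forall>k::nat<p. (v1, v2) \<noteq> ((int k * u1) mod int p, (int k * u2) mod int p)"
    and ab: "a < p" "b < p" "a' < p" "b' < p"
    and e1: "(int a * u1 + int b * v1) mod int p = (int a' * u1 + int b' * v1) mod int p"
    and e2: "(int a * u2 + int b * v2) mod int p = (int a' * u2 + int b' * v2) mod int p"
  shows "a = a' \<and> b = b'"
proof -
  define P where "P = int p"
  have Pp: "prime P" unfolding P_def using pp by simp
  define da where "da = int a - int a'"
  define db where "db = int b - int b'"
  have d1: "P dvd da * u1 + db * v1"
    using e1 unfolding P_def da_def db_def by (simp add: mod_eq_dvd_iff algebra_simps)
  have d2: "P dvd da * u2 + db * v2"
    using e2 unfolding P_def da_def db_def by (simp add: mod_eq_dvd_iff algebra_simps)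
  have "P dvd db"
  proof (rule ccontr)
    assume nd: "\<not> P dvd db"
    have "coprime db P" using prime_imp_coprime[OF Pp nd] by (simp add: coprime_commute)
    then obtain i where i: "[db * i = 1] (mod P)" using cong_solve_coprime_int by blast
    hence di: "P dvd db * i - 1" by (simp add: cong_iff_dvd_diff dvd_diff_commute)
    define c where "c = - i * da"
    have key: "v mod P = (c * u) mod P" if dv: "P dvd da * u + db * v" for u v
    proof -
      have "v - c * u = - v * (db * i - 1) + i * (da * u + db * v)"
        unfolding c_def by (simp add: algebra_simps)
      moreover have "P dvd - v * (db * i - 1) + i * (da * u + db * v)"
        using di dv by simp
      ultimately have "P dvd v - c * u" by simp
      thus ?thesis by (simp add: mod_eq_dvd_iff)
    qed
    define k where "k = nat (c mod P)"
    have P0: "P > 0" using pp unfolding P_def by (simp add: prime_gt_0_nat)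
    have k: "int k = c mod P" unfolding k_def using P0 by simp
    have kp: "k < p" using k P0 unfolding P_def
      by (metis Euclidean_Rings.pos_mod_bound of_nat_less_iff)
    have "(v1, v2) = ((int k * u1) mod P, (int k * u2) mod P)"
    proof -
      have "v1 = v1 mod P" using vr unfolding P_def by simp
      also have "\<dots> = (c * u1) mod P" by (rule key[OF d1])
      also have "\<dots> = (int k * u1) mod P" unfolding k by (simp add: mod_mult_left_eq)
      finally have 1: "v1 = (int k * u1) mod P" .
      have "v2 = v2 mod P" using vr unfolding P_def by simp
      also have "\<dots> = (c * u2) mod P" by (rule key[OF d2])
      also have "\<dots> = (int k * u2) mod P" unfolding k by (simp add: mod_mult_left_eq)
      finally have 2: "v2 = (int k * u2) mod P" .
      show ?thesis using 1 2 by simp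
    qed
    thus False using nv kp unfolding P_def by blast
  qed
  hence "db = 0" by (rule small_dvd_zero) (use ab in \<open>auto simp: db_def P_def\<close>)
  hence bb: "b = b'" unfolding db_def by simp
  have "P dvd da"
  proof (cases "u1 = 0")
    case True
    hence "u2 \<noteq> 0" using unz by simp
    hence "\<not> P dvd u2" using ur unfolding P_def using zdvd_not_zless by auto
    moreover have "P dvd da * u2" using d2 \<open>db = 0\<close> by simp
    ultimately show ?thesis using Pp prime_dvd_mult_iff by blast
  next
    case False
    hence "\<not> P dvd u1" using ur unfolding P_def using zdvd_not_zless by auto
    moreover have "P dvd da * u1" using d1 \<open>db = 0\<close> by simp
    ultimately show ?thesis using Pp prime_dvd_mult_iff by blast
  qed
  hence "da = 0" by (rule small_dvd_zero) (use ab in \<open>auto simp: da_def P_def\<close>)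
  hence "a = a'" unfolding da_def by simp
  thus ?thesis using bb by simp
qed

lemma la_surj:
  fixes u1 u2 v1 v2 :: int and p :: nat
  assumes pp: "prime p"
    and ur: "0 \<le> u1" "u1 < int p" "0 \<le> u2" "u2 < int p" and vr: "0 \<le> v1" "v1 < int p" "0 \<le> v2" "v2 < int p"
    and unz: "(u1, u2) \<noteq> (0, 0)"
    and nv: "\<forall>k::nat<p. (v1, v2) \<noteq> ((int k * u1) mod int p, (int k * u2) mod int p)"
    and w: "w \<in> {0..<int p} \<times> {0..<int p}"
  shows "\<exists>a b. a < p \<and> b < p \<and> w = ((int a * u1 + int b * v1) mod int p, (int a * u2 + int b * v2) mod int p)"
proof -
  define F where "F = (\<lambda>(a::nat, b::nat). ((int a * u1 + int b * v1) mod int p, (int a * u2 + int b * v2) mod int p))"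
  have inj: "inj_on F ({..<p} \<times> {..<p})"
  proof (rule inj_onI)
    fix x y assume x: "x \<in> {..<p} \<times> {..<p}" and y: "y \<in> {..<p} \<times> {..<p}" and Fxy: "F x = F y"
    obtain a b where xab: "x = (a,b)" by (cases x)
    obtain a' b' where yab: "y = (a',b')" by (cases y)
    have "a = a' \<and> b = b'"
      by (rule la_inj[OF pp ur vr unz nv]) (use x y Fxy xab yab in \<open>auto simp: F_def\<close>)
    thus "x = y" using xab yab by simp
  qed
  have p0: "p > 0" using pp by (simp add: prime_gt_0_nat)
  have sub: "F ` ({..<p} \<times> {..<p}) \<subseteq> {0..<int p} \<times> {0..<int p}"
    unfolding F_def using p0 by auto
  have "card (F ` ({..<p} \<times> {..<p})) = card ({0..<int p} \<times> {0..<int p})"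
    using card_image[OF inj] by (simp add: card_cartesian_product)
  hence "F ` ({..<p} \<times> {..<p}) = {0..<int p} \<times> {0..<int p}"
    using sub by (intro card_subset_eq) auto
  then obtain x where "x \<in> {..<p} \<times> {..<p}" "w = F x" using w by blast
  thus ?thesis unfolding F_def by auto
qed

lemma center_mem: "z \<in> grp_center G \<longleftrightarrow> z \<in> carrier G \<and> (\<forall>x\<in>carrier G. z \<otimes>\<^bsub>G\<^esub> x = x \<otimes>\<^bsub>G\<^esub> z)"
  unfolding grp_center_def by simp

lemma (in group) center_normal: "grp_center G \<lhd> G"
proof -
  have sg: "subgroup (grp_center G) G"
  proof (rule subgroupI)
    show "grp_center G \<subseteq> carrier G" unfolding grp_center_def by (rule Collect_subset)
    have "\<one> \<in> grp_center G" unfolding center_mem by simp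
    thus "grp_center G \<noteq> {}" by (rule ex_in_conv[THEN iffD1, OF exI])
  next
    fix a assume a: "a \<in> grp_center G"
    have ac000: "a \<in> carrier G \<and> (\<forall>x\<in>carrier G. a \<otimes> x = x \<otimes> a)" using a unfolding center_mem .
    note ac0 = conjunct1[OF ac000] conjunct2[OF ac000]
    have "inv a \<otimes> x = x \<otimes> inv a" if x: "x \<in> carrier G" for x
    proof -
      have com: "a \<otimes> x = x \<otimes> a" using ac0 x by blast
      have ai: "inv a \<in> carrier G" using ac0(1) by simp
      have "inv a \<otimes> x = inv a \<otimes> x \<otimes> (a \<otimes> inv a)" using ai x ac0(1) by simp
      also have "\<dots> = inv a \<otimes> (x \<otimes> a) \<otimes> inv a" using ai x ac0(1) by (simp only: m_assoc m_closed)
      also have "\<dots> = inv a \<otimes> (a \<otimes> x) \<otimes> inv a" using com by simp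
      also have "\<dots> = x \<otimes> inv a" using ai x ac0(1) by (simp add: m_assoc[symmetric])
      finally show ?thesis .
    qed
    hence "\<forall>x\<in>carrier G. inv a \<otimes> x = x \<otimes> inv a" by (rule ballI)
    moreover have "inv a \<in> carrier G" using ac0(1) by simp
    ultimately show "inv a \<in> grp_center G" unfolding center_mem by (rule conjI[rotated])
  next
    fix a b assume a: "a \<in> grp_center G" and b: "b \<in> grp_center G"
    have ac00: "a \<in> carrier G \<and> (\<forall>x\<in>carrier G. a \<otimes> x = x \<otimes> a)" using a unfolding center_mem .
    note ac = conjunct1[OF ac00] conjunct2[OF ac00]
    have bc00: "b \<in> carrier G \<and> (\<forall>x\<in>carrier G. b \<otimes> x = x \<otimes> b)" using b unfolding center_mem .
    note bc = conjunct1[OF bc00] conjunct2[OF bc00]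
    have "a \<otimes> b \<otimes> x = x \<otimes> (a \<otimes> b)" if x: "x \<in> carrier G" for x
    proof -
      have "a \<otimes> b \<otimes> x = a \<otimes> (b \<otimes> x)" using ac(1) bc(1) x by (simp only: m_assoc)
      also have "\<dots> = a \<otimes> (x \<otimes> b)" using bc(2) x by simp
      also have "\<dots> = (a \<otimes> x) \<otimes> b" using ac(1) bc(1) x by (simp only: m_assoc)
      also have "\<dots> = (x \<otimes> a) \<otimes> b" using ac(2) x by simp
      also have "\<dots> = x \<otimes> (a \<otimes> b)" using ac(1) bc(1) x by (simp only: m_assoc)
      finally show ?thesis .
    qed
    hence "\<forall>x\<in>carrier G. a \<otimes> b \<otimes> x = x \<otimes> (a \<otimes> b)" by (rule ballI)
    moreover have "a \<otimes> b \<in> carrier G" using ac(1) bc(1) by simp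
    ultimately show "a \<otimes> b \<in> grp_center G" unfolding center_mem by (rule conjI[rotated])
  qed
  show ?thesis unfolding normal_inv_iff
  proof (intro conjI sg ballI)
    fix x h assume x: "x \<in> carrier G" and h: "h \<in> grp_center G"
    have hc000: "h \<in> carrier G \<and> (\<forall>x\<in>carrier G. h \<otimes> x = x \<otimes> h)" using h unfolding center_mem .
    note hc0 = conjunct1[OF hc000] conjunct2[OF hc000]
    have hc: "h \<in> carrier G" and com: "h \<otimes> x = x \<otimes> h" using hc0 x by (blast, blast)
    have "x \<otimes> h \<otimes> inv x = h \<otimes> x \<otimes> inv x" using com by simp
    also have "\<dots> = h \<otimes> (x \<otimes> inv x)" using hc x by (simp only: m_assoc inv_closed)
    also have "\<dots> = h" using hc x by simp
    finally have "x \<otimes> h \<otimes> inv x = h" .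
    thus "x \<otimes> h \<otimes> inv x \<in> grp_center G" using h by simp
  qed
qed

locale nc = group G for G (structure) +
  fixes p :: nat and \<phi>
  assumes finG: "finite (carrier G)" and pp: "prime p"
    and phi: "\<phi> \<in> iso (G Mod (grp_center G)) (integer_mod_group p \<times>\<times> integer_mod_group p)"
begin

abbreviation "Z \<equiv> grp_center G"
definition psi where "psi x = \<phi> (Z #> x)"

lemma Zn: "Z \<lhd> G" by (rule center_normal)
lemma Zsub: "subgroup Z G" using Zn by (rule normal_imp_subgroup)

lemma Zc: "z \<in> Z \<Longrightarrow> z \<in> carrier G" unfolding center_mem by (elim conjE)
lemma Zcomm: "z \<in> Z \<Longrightarrow> x \<in> carrier G \<Longrightarrow> z \<otimes> x = x \<otimes> z" unfolding center_mem by (elim conjE bspec)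

lemma p0: "p > 0" using pp by (simp add: prime_gt_0_nat)

lemma phi_hom: "\<phi> \<in> hom (G Mod Z) (integer_mod_group p \<times>\<times> integer_mod_group p)"
  using phi unfolding iso_def by auto

lemma coset_carrier: "x \<in> carrier G \<Longrightarrow> Z #> x \<in> carrier (G Mod Z)"
  unfolding carrier_FactGroup by auto

lemma psi_range: "x \<in> carrier G \<Longrightarrow> psi x \<in> {0..<int p} \<times> {0..<int p}"
proof -
  assume x: "x \<in> carrier G"
  have "psi x \<in> carrier (integer_mod_group p \<times>\<times> integer_mod_group p)"
    unfolding psi_def using phi_hom coset_carrier[OF x] unfolding hom_def by auto
  thus ?thesis using p0 by (simp add: carrier_integer_mod_group)
qed

lemma psi_mult: "x \<in> carrier G \<Longrightarrow> y \<in> carrier G \<Longrightarrow>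
   psi (x \<otimes> y) = ((fst (psi x) + fst (psi y)) mod int p, (snd (psi x) + snd (psi y)) mod int p)"
proof -
  assume x: "x \<in> carrier G" and y: "y \<in> carrier G"
  have "Z #> (x \<otimes> y) = (Z #> x) \<otimes>\<^bsub>G Mod Z\<^esub> (Z #> y)"
    using normal.rcos_sum[OF Zn x y] by simp
  hence "psi (x \<otimes> y) = \<phi> ((Z #> x) \<otimes>\<^bsub>G Mod Z\<^esub> (Z #> y))" unfolding psi_def by simp
  also have "\<dots> = \<phi> (Z #> x) \<otimes>\<^bsub>integer_mod_group p \<times>\<times> integer_mod_group p\<^esub> \<phi> (Z #> y)"
    by (rule hom_mult[OF phi_hom coset_carrier[OF x] coset_carrier[OF y]])
  finally have "psi (x \<otimes> y) = \<phi> (Z #> x) \<otimes>\<^bsub>integer_mod_group p \<times>\<times> integer_mod_group p\<^esub> \<phi> (Z #> y)" .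
  thus ?thesis unfolding psi_def by (simp add: mult_DirProd')
qed

lemma psi_zero: "x \<in> carrier G \<Longrightarrow> psi x = (0,0) \<longleftrightarrow> x \<in> Z"
proof -
  assume x: "x \<in> carrier G"
  have grpF: "group (G Mod Z)" using Zn by (rule normal.factorgroup_is_group)
  have grpH: "group (integer_mod_group p \<times>\<times> integer_mod_group p)" by (simp add: DirProd_group)
  have "\<phi> Z = (0,0)" using hom_one[OF phi_hom grpF grpH] by simp
  have Zcar: "Z \<in> carrier (G Mod Z)" using monoid.one_closed[OF group.is_monoid[OF grpF]] by simp
  have inj: "inj_on \<phi> (carrier (G Mod Z))" using phi unfolding iso_def bij_betw_def by auto
  have "psi x = (0,0) \<longleftrightarrow> Z #> x = Z"
    unfolding psi_def using inj_onD[OF inj _ coset_carrier[OF x] Zcar] \<open>\<phi> Z = (0,0)\<close> by auto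
  also have "\<dots> \<longleftrightarrow> x \<in> Z"
  proof
    assume "Z #> x = Z"
    moreover have "x \<in> Z #> x" using rcos_self[OF x Zsub] .
    ultimately show "x \<in> Z" by simp
  next
    assume "x \<in> Z" thus "Z #> x = Z" using subgroup.rcos_const[OF Zsub is_group] by simp
  qed
  finally show ?thesis .
qed

lemma psi_one: "psi \<one> = (0,0)"
  using psi_zero[of \<one>] subgroup.one_closed[OF Zsub] by simp

lemma psi_pow: "x \<in> carrier G \<Longrightarrow> psi (x [^] (k::nat)) = ((int k * fst (psi x)) mod int p, (int k * snd (psi x)) mod int p)"
proof (induction k)
  case 0 thus ?case using psi_one by simp
next
  case (Suc k)
  have r: "0 \<le> fst (psi x)" "fst (psi x) < int p" "0 \<le> snd (psi x)" "snd (psi x) < int p"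
    using psi_range[OF Suc.prems] by auto
  have "psi (x [^] Suc k) = psi (x [^] k \<otimes> x)" by simp
  also have "\<dots> = ((fst (psi (x [^] k)) + fst (psi x)) mod int p, (snd (psi (x [^] k)) + snd (psi x)) mod int p)"
    using psi_mult Suc.prems by simp
  also have "\<dots> = ((int (Suc k) * fst (psi x)) mod int p, (int (Suc k) * snd (psi x)) mod int p)"
    using Suc by (simp add: mod_add_left_eq mod_add_right_eq algebra_simps)
  finally show ?case .
qed

lemma psi_eq: assumes x: "x \<in> carrier G" and y: "y \<in> carrier G" and e: "psi x = psi y"
  shows "\<exists>z\<in>Z. x = y \<otimes> z"
proof -
  have "psi (inv y \<otimes> y) = (0,0)" using psi_one y by simp
  hence "psi (inv y \<otimes> x) = (0,0)" using psi_mult[OF inv_closed[OF y] y] psi_mult[OF inv_closed[OF y] x] e by simp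
  hence "inv y \<otimes> x \<in> Z" using psi_zero x y by simp
  moreover have "x = y \<otimes> (inv y \<otimes> x)" using x y by (simp add: m_assoc[symmetric])
  ultimately show ?thesis by blast
qed

end

context group begin

lemma comm_mult_r: "x \<in> carrier G \<Longrightarrow> a \<in> carrier G \<Longrightarrow> b \<in> carrier G \<Longrightarrow>
  x \<otimes> a = a \<otimes> x \<Longrightarrow> x \<otimes> b = b \<otimes> x \<Longrightarrow> x \<otimes> (a \<otimes> b) = (a \<otimes> b) \<otimes> x"
proof -
  assume c: "x \<in> carrier G" "a \<in> carrier G" "b \<in> carrier G" and ca: "x \<otimes> a = a \<otimes> x" and cb: "x \<otimes> b = b \<otimes> x"
  have "x \<otimes> (a \<otimes> b) = (x \<otimes> a) \<otimes> b" using c by (simp only: m_assoc)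
  also have "\<dots> = (a \<otimes> x) \<otimes> b" using ca by simp
  also have "\<dots> = a \<otimes> (x \<otimes> b)" using c by (simp only: m_assoc)
  also have "\<dots> = a \<otimes> (b \<otimes> x)" using cb by simp
  also have "\<dots> = (a \<otimes> b) \<otimes> x" using c by (simp only: m_assoc)
  finally show ?thesis .
qed

lemma comm_pow_r: "x \<in> carrier G \<Longrightarrow> a \<in> carrier G \<Longrightarrow> x \<otimes> a = a \<otimes> x \<Longrightarrow> x \<otimes> (a [^] (n::nat)) = (a [^] n) \<otimes> x"
proof (induction n)
  case 0 thus ?case by simp
next
  case (Suc n)
  have "x \<otimes> (a [^] n \<otimes> a) = (a [^] n \<otimes> a) \<otimes> x"
    by (rule comm_mult_r) (use Suc in auto)
  thus ?case by simp
qed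

lemma comm_sym: "x \<otimes> a = a \<otimes> x \<Longrightarrow> a \<otimes> x = x \<otimes> a" by simp

end

context nc begin

lemma Zcomm': "z \<in> Z \<Longrightarrow> x \<in> carrier G \<Longrightarrow> x \<otimes> z = z \<otimes> x" using Zcomm by simp

lemma cent_char:
  assumes x: "x \<in> carrier G" "x \<notin> Z" and y: "y \<in> carrier G"
  shows "x \<otimes> y = y \<otimes> x \<longleftrightarrow> (\<exists>k<p. \<exists>z\<in>Z. y = x [^] k \<otimes> z)"
proof
  assume "\<exists>k<p. \<exists>z\<in>Z. y = x [^] k \<otimes> z"
  then obtain k :: nat and z where z: "z \<in> Z" and yk: "y = x [^] k \<otimes> z" by blast
  have "x \<otimes> (x [^] k \<otimes> z) = (x [^] k \<otimes> z) \<otimes> x"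
    by (rule comm_mult_r) (use x z Zc Zcomm' comm_pow_r in auto)
  thus "x \<otimes> y = y \<otimes> x" using yk by simp
next
  assume com: "x \<otimes> y = y \<otimes> x"
  show "\<exists>k<p. \<exists>z\<in>Z. y = x [^] k \<otimes> z"
  proof (rule ccontr)
    assume nex: "\<not> ?thesis"
    define u1 where "u1 = fst (psi x)"
    define u2 where "u2 = snd (psi x)"
    define v1 where "v1 = fst (psi y)"
    define v2 where "v2 = snd (psi y)"
    have ur: "0 \<le> u1" "u1 < int p" "0 \<le> u2" "u2 < int p"
      using psi_range[OF x(1)] unfolding u1_def u2_def by auto
    have vr: "0 \<le> v1" "v1 < int p" "0 \<le> v2" "v2 < int p"
      using psi_range[OF y] unfolding v1_def v2_def by auto
    have unz: "(u1, u2) \<noteq> (0, 0)" using psi_zero[OF x(1)] x(2) unfolding u1_def u2_def by simp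
    have nv: "\<forall>k::nat<p. (v1, v2) \<noteq> ((int k * u1) mod int p, (int k * u2) mod int p)"
    proof (intro allI impI notI)
      fix k :: nat assume kp: "k < p" and e: "(v1, v2) = ((int k * u1) mod int p, (int k * u2) mod int p)"
      have "psi y = psi (x [^] k)" using e psi_pow[OF x(1), of k] unfolding u1_def u2_def v1_def v2_def
        by (simp add: prod_eq_iff)
      then obtain z where "z \<in> Z" "y = x [^] k \<otimes> z" using psi_eq[OF y nat_pow_closed[OF x(1)]] by blast
      thus False using nex kp by blast
    qed
    have "x \<in> Z"
      unfolding center_mem
    proof (intro conjI ballI)
      show "x \<in> carrier G" by (rule x(1))
      fix g assume g: "g \<in> carrier G"
      obtain a b where ab: "a < p" "b < p"
        and w: "psi g = ((int a * u1 + int b * v1) mod int p, (int a * u2 + int b * v2) mod int p)"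
        using la_surj[OF pp ur vr unz nv psi_range[OF g]] by blast
      have xa: "x [^] a \<in> carrier G" and yb: "y [^] b \<in> carrier G" using x y by auto
      have "psi (x [^] a \<otimes> y [^] b) = psi g"
        using psi_mult[OF xa yb] psi_pow[OF x(1), of a] psi_pow[OF y, of b] w
        unfolding u1_def u2_def v1_def v2_def by (simp add: mod_add_eq)
      then obtain z where z: "z \<in> Z" and gz: "g = x [^] a \<otimes> y [^] b \<otimes> z"
        using psi_eq[OF g m_closed[OF xa yb]] by metis
      have "x \<otimes> (x [^] a \<otimes> y [^] b \<otimes> z) = (x [^] a \<otimes> y [^] b \<otimes> z) \<otimes> x"
      proof (rule comm_mult_r)
        show "x \<otimes> (x [^] a \<otimes> y [^] b) = x [^] a \<otimes> y [^] b \<otimes> x"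
          by (rule comm_mult_r) (use x y xa yb com comm_pow_r in auto)
      qed (use x xa yb z Zc Zcomm' in auto)
      thus "x \<otimes> g = g \<otimes> x" using gz by simp
    qed
    thus False using x(2) by blast
  qed
qed

lemma cent_abelian:
  assumes x: "x \<in> carrier G" "x \<notin> Z" and a: "a \<in> carrier G" "x \<otimes> a = a \<otimes> x"
    and b: "b \<in> carrier G" "x \<otimes> b = b \<otimes> x"
  shows "a \<otimes> b = b \<otimes> a"
proof -
  obtain k :: nat and z where z: "z \<in> Z" and ak: "a = x [^] k \<otimes> z" using cent_char[OF x a(1)] a(2) by blast
  obtain j :: nat and z' where z': "z' \<in> Z" and bj: "b = x [^] j \<otimes> z'" using cent_char[OF x b(1)] b(2) by blast
  have xj: "x [^] j \<in> carrier G" and xk: "x [^] k \<in> carrier G" using x by auto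
  have "(x [^] j) \<otimes> (x [^] k \<otimes> z) = (x [^] k \<otimes> z) \<otimes> (x [^] j)"
    by (rule comm_mult_r) (use x xj xk z Zc Zcomm' nat_pow_comm in auto)
  hence c1: "a \<otimes> x [^] j = x [^] j \<otimes> a" using ak by simp
  have "a \<otimes> (x [^] j \<otimes> z') = (x [^] j \<otimes> z') \<otimes> a"
    by (rule comm_mult_r) (use a xj z' Zc Zcomm' c1 in auto)
  thus ?thesis using bj by simp
qed

lemma cent_eq:
  assumes x: "x \<in> carrier G" "x \<notin> Z" and y: "y \<in> carrier G" "y \<notin> Z" and xy: "x \<otimes> y = y \<otimes> x"
    and g: "g \<in> carrier G"
  shows "x \<otimes> g = g \<otimes> x \<longleftrightarrow> y \<otimes> g = g \<otimes> y"
proof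
  assume "x \<otimes> g = g \<otimes> x"
  hence "g \<otimes> y = y \<otimes> g" by (intro cent_abelian[OF x g]) (use y xy in auto)
  thus "y \<otimes> g = g \<otimes> y" by simp
next
  assume "y \<otimes> g = g \<otimes> y"
  hence "g \<otimes> x = x \<otimes> g" by (intro cent_abelian[OF y g]) (use x xy in auto)
  thus "x \<otimes> g = g \<otimes> x" by simp
qed

end

lemma modh: fixes a b c P :: int
  assumes "(a + b) mod P = 0" "0 \<le> c" "c < P"
  shows "((a + c) mod P + b) mod P = c"
proof -
  have "((a + c) mod P + b) mod P = (a + c + b) mod P" by (rule mod_add_left_eq)
  also have "\<dots> = (c + (a + b)) mod P" by (simp add: add.commute add.left_commute)
  also have "\<dots> = (c + (a + b) mod P) mod P" by (simp add: mod_add_right_eq)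
  also have "\<dots> = c" using assms by simp
  finally show ?thesis .
qed

lemma kj_eq:
  fixes u1 u2 :: int and p k j :: nat
  assumes pp: "prime p"
    and ur: "0 \<le> u1" "u1 < int p" "0 \<le> u2" "u2 < int p"
    and unz: "(u1, u2) \<noteq> (0, 0)" and kj: "k < p" "j < p"
    and e1: "(int k * u1) mod int p = (int j * u1) mod int p"
    and e2: "(int k * u2) mod int p = (int j * u2) mod int p"
  shows "k = j"
proof -
  define P where "P = int p"
  have Pp: "prime P" unfolding P_def using pp by simp
  define d where "d = int k - int j"
  have d1: "P dvd d * u1" using e1 unfolding P_def d_def by (simp add: mod_eq_dvd_iff algebra_simps)
  have d2: "P dvd d * u2" using e2 unfolding P_def d_def by (simp add: mod_eq_dvd_iff algebra_simps)
  have "P dvd d"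
  proof (cases "u1 = 0")
    case True
    hence "u2 \<noteq> 0" using unz by simp
    hence "\<not> P dvd u2" using ur unfolding P_def using zdvd_not_zless by auto
    thus ?thesis using d2 Pp prime_dvd_mult_iff by blast
  next
    case False
    hence "\<not> P dvd u1" using ur unfolding P_def using zdvd_not_zless by auto
    thus ?thesis using d1 Pp prime_dvd_mult_iff by blast
  qed
  hence "d = 0" by (rule small_dvd_zero) (use kj in \<open>auto simp: d_def P_def\<close>)
  thus ?thesis unfolding d_def by simp
qed

context nc begin

definition cent where "cent x = {g \<in> carrier G. x \<otimes> g = g \<otimes> x}"
abbreviation "cact \<equiv> (\<lambda>g. \<lambda>h\<in>carrier G. g \<otimes> h \<otimes> inv g)"

lemma ga: "group_action G (carrier G) cact" by (rule action_by_conjugation)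

lemma class_orbit: "x \<in> carrier G \<Longrightarrow> conj_class G x = orbit G cact x"
  unfolding conj_class_def orbit_def by auto

lemma stab_cent: "x \<in> carrier G \<Longrightarrow> stabilizer G cact x = cent x"
  unfolding stabilizer_def cent_def
proof (intro Collect_cong conj_cong refl)
  fix g assume x: "x \<in> carrier G" and g: "g \<in> carrier G"
  have "g \<otimes> x \<otimes> inv g = x \<longleftrightarrow> g \<otimes> x = x \<otimes> g" using inv_solve_right'[of x "g \<otimes> x" g] x g by simp
  thus "cact g x = x \<longleftrightarrow> x \<otimes> g = g \<otimes> x" using x g by auto
qed

lemma class_size: "x \<in> carrier G \<Longrightarrow> card (conj_class G x) * card (cent x) = card (carrier G)"
  using group_action.orbit_stabilizer_theorem[OF ga] class_orbit stab_cent unfolding Coset.order_def by simp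

lemma class_carrier: "x \<in> carrier G \<Longrightarrow> conj_class G x \<subseteq> carrier G"
  unfolding conj_class_def by auto

lemma class_self: "x \<in> carrier G \<Longrightarrow> x \<in> conj_class G x"
  using group_action.orbit_refl[OF ga] class_orbit by simp

lemma class_eq: assumes x: "x \<in> carrier G" and w: "w \<in> conj_class G x"
  shows "conj_class G w = conj_class G x"
proof -
  have wc: "w \<in> carrier G" using class_carrier[OF x] w by auto
  have wo: "w \<in> orbit G cact x" using w class_orbit[OF x] by simp
  show ?thesis
  proof
    show "conj_class G w \<subseteq> conj_class G x"
      using group_action.orbit_trans[OF ga x wc _ wo] class_orbit[OF x] class_orbit[OF wc] class_carrier[OF wc] by auto
    have "x \<in> orbit G cact w" using group_action.orbit_sym[OF ga x wc wo] .
    thus "conj_class G x \<subseteq> conj_class G w"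
      using group_action.orbit_trans[OF ga wc x] class_orbit[OF x] class_orbit[OF wc] class_carrier[OF x] by auto
  qed
qed

lemma class_disj: assumes x: "x \<in> carrier G" and y: "y \<in> carrier G"
  and ne: "conj_class G x \<noteq> conj_class G y" shows "conj_class G x \<inter> conj_class G y = {}"
  using class_eq[OF x] class_eq[OF y] ne by blast

lemma class_mem: assumes x: "x \<in> carrier G" and y: "y \<in> conj_class G x"
  shows "y \<in> carrier G" "\<exists>z\<in>Z. y = x \<otimes> z"
proof -
  obtain g where g: "g \<in> carrier G" and yg: "y = g \<otimes> x \<otimes> inv g" using y unfolding conj_class_def by auto
  show yc: "y \<in> carrier G" using g x yg by simp
  have gi: "inv g \<in> carrier G" using g by simp
  have z0: "psi (g \<otimes> inv g) = (0,0)" using g psi_one by simp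
  have r: "0 \<le> fst (psi x)" "fst (psi x) < int p" "0 \<le> snd (psi x)" "snd (psi x) < int p"
    using psi_range[OF x] by auto
  have "psi y = psi x"
    using yg psi_mult[OF m_closed[OF g x] gi] psi_mult[OF g x] psi_mult[OF g gi] z0 r
    by (simp add: modh prod_eq_iff)
  thus "\<exists>z\<in>Z. y = x \<otimes> z" using psi_eq[OF yc x] by blast
qed

lemma class_nc: assumes x: "x \<in> carrier G" "x \<notin> Z" and y: "y \<in> conj_class G x"
  shows "y \<in> carrier G" "y \<notin> Z" "x \<otimes> y = y \<otimes> x" "cent y = cent x"
proof -
  show yc: "y \<in> carrier G" using class_mem[OF x(1) y] by blast
  obtain z where z: "z \<in> Z" and yz: "y = x \<otimes> z" using class_mem[OF x(1) y] by blast
  have zc: "z \<in> carrier G" using Zc[OF z] .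
  show yZ: "y \<notin> Z"
  proof
    assume "y \<in> Z"
    hence "y \<otimes> inv z \<in> Z" using z subgroup.m_closed[OF Zsub] subgroup.m_inv_closed[OF Zsub] by blast
    moreover have "y \<otimes> inv z = x" using yz x zc by (simp add: m_assoc)
    ultimately show False using x by simp
  qed
  show xy: "x \<otimes> y = y \<otimes> x"
    using comm_mult_r[OF x(1) x(1) zc refl Zcomm'[OF z x(1)]] yz by simp
  show "cent y = cent x"
    unfolding cent_def using cent_eq[OF x yc yZ xy] by blast
qed

lemma cent_card: assumes x: "x \<in> carrier G" "x \<notin> Z"
  shows "card (cent x) = p * card Z"
proof -
  define F where "F = (\<lambda>(k::nat, z). x [^] k \<otimes> z)"
  have img: "cent x = F ` ({..<p} \<times> Z)"
  proof
    show "cent x \<subseteq> F ` ({..<p} \<times> Z)"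
    proof
      fix y assume "y \<in> cent x"
      hence y: "y \<in> carrier G" "x \<otimes> y = y \<otimes> x" unfolding cent_def by auto
      then obtain k :: nat and z where "k < p" "z \<in> Z" "y = x [^] k \<otimes> z" using cent_char[OF x y(1)] by blast
      thus "y \<in> F ` ({..<p} \<times> Z)" unfolding F_def by force
    qed
    show "F ` ({..<p} \<times> Z) \<subseteq> cent x"
    proof
      fix y assume "y \<in> F ` ({..<p} \<times> Z)"
      then obtain k z where k: "k < p" and z: "z \<in> Z" and yk: "y = x [^] k \<otimes> z" unfolding F_def by auto
      have yc: "y \<in> carrier G" using yk z Zc x by simp
      have "x \<otimes> y = y \<otimes> x" using cent_char[OF x yc] k z yk by blast
      thus "y \<in> cent x" using yc unfolding cent_def by simp
    qed
  qed
  have psiZ: "psi (x [^] k \<otimes> z) = psi (x [^] k)" if z: "z \<in> Z" for k :: nat and z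
  proof -
    have "psi z = (0,0)" using psi_zero Zc[OF z] z by simp
    moreover have "0 \<le> fst (psi (x [^] k))" "fst (psi (x [^] k)) < int p"
      "0 \<le> snd (psi (x [^] k))" "snd (psi (x [^] k)) < int p"
      using psi_range[of "x [^] k"] x by auto
    ultimately show ?thesis using psi_mult[of "x [^] k" z] x Zc[OF z] by (simp add: prod_eq_iff)
  qed
  have inj: "inj_on F ({..<p} \<times> Z)"
  proof (rule inj_onI)
    fix a b assume a: "a \<in> {..<p} \<times> Z" and b: "b \<in> {..<p} \<times> Z" and e: "F a = F b"
    obtain k z where akz: "a = (k, z)" by (cases a)
    obtain j z' where bjz: "b = (j, z')" by (cases b)
    have k: "k < p" "z \<in> Z" and j: "j < p" "z' \<in> Z" using a b akz bjz by auto
    have e': "x [^] k \<otimes> z = x [^] j \<otimes> z'" using e akz bjz unfolding F_def by simp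
    have "psi (x [^] k) = psi (x [^] j)" using psiZ[OF k(2), of k] psiZ[OF j(2), of j] e' by simp
    hence "k = j"
      using psi_pow[OF x(1), of k] psi_pow[OF x(1), of j] psi_range[OF x(1)] psi_zero[OF x(1)] x(2) k j
      by (intro kj_eq[OF pp, of "fst (psi x)" "snd (psi x)"]) (auto simp: prod_eq_iff)
    moreover have "z = z'" using e' \<open>k = j\<close> x(1) Zc[OF k(2)] Zc[OF j(2)] by simp
    ultimately show "a = b" using akz bjz by simp
  qed
  have finZ: "finite Z" using finG finite_subset[of Z "carrier G"] Zc by blast
  show ?thesis unfolding img card_image[OF inj] using finZ by (simp add: card_cartesian_product)
qed

end

context nc begin

definition rep :: "'a set \<Rightarrow> 'a" where "rep X = (SOME x. x \<in> X)"

lemma V_rep: assumes X: "X \<in> nccc_vertices G"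
  shows "rep X \<in> carrier G" "rep X \<notin> Z" "X = conj_class G (rep X)"
proof -
  obtain x where x: "x \<in> carrier G" "x \<notin> Z" and Xx: "X = conj_class G x"
    using X unfolding nccc_vertices_def by auto
  have "x \<in> X" using class_self[OF x(1)] Xx by simp
  hence r: "rep X \<in> conj_class G x" unfolding rep_def using Xx by (metis someI_ex)
  show "rep X \<in> carrier G" "rep X \<notin> Z" using class_nc[OF x r] by auto
  show "X = conj_class G (rep X)" using class_eq[OF x(1) r] Xx by simp
qed

lemma cent_self: "x \<in> carrier G \<Longrightarrow> x \<in> cent x" unfolding cent_def by simp

lemma cent_eq_set: assumes x: "x \<in> carrier G" "x \<notin> Z" and y: "y \<in> carrier G" "y \<notin> Z"
  and xy: "x \<otimes> y = y \<otimes> x" shows "cent y = cent x"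
  unfolding cent_def using cent_eq[OF x y xy] by blast

lemma adj_iff: assumes X: "X \<in> nccc_vertices G" and Y: "Y \<in> nccc_vertices G"
  shows "nccc_adj G X Y \<longleftrightarrow> cent (rep X) \<noteq> cent (rep Y)"
proof -
  note rx = V_rep[OF X] and ry = V_rep[OF Y]
  show ?thesis
  proof
    assume adj: "nccc_adj G X Y"
    show "cent (rep X) \<noteq> cent (rep Y)"
    proof
      assume e: "cent (rep X) = cent (rep Y)"
      have "rep Y \<in> cent (rep X)" using e cent_self[OF ry(1)] by simp
      hence "rep X \<otimes> rep Y = rep Y \<otimes> rep X" unfolding cent_def by simp
      moreover have "rep X \<in> X" "rep Y \<in> Y" using class_self rx ry by auto
      ultimately show False using adj unfolding nccc_adj_def by blast
    qed
  next
    assume ne: "cent (rep X) \<noteq> cent (rep Y)"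
    have "X \<noteq> Y" using ne by auto
    moreover have "\<forall>x'\<in>X. \<forall>y'\<in>Y. x' \<otimes> y' \<noteq> y' \<otimes> x'"
    proof (intro ballI notI)
      fix x' y' assume x': "x' \<in> X" and y': "y' \<in> Y" and c: "x' \<otimes> y' = y' \<otimes> x'"
      have x'c: "x' \<in> conj_class G (rep X)" and y'c: "y' \<in> conj_class G (rep Y)" using x' y' rx ry by auto
      note nx = class_nc[OF rx(1) rx(2) x'c] and ny = class_nc[OF ry(1) ry(2) y'c]
      have "cent y' = cent x'" using cent_eq_set[OF nx(1) nx(2) ny(1) ny(2) c] .
      thus False using nx(4) ny(4) ne by simp
    qed
    ultimately show "nccc_adj G X Y" using X Y unfolding nccc_adj_def by blast
  qed
qed

lemma finZ: "finite Z" using finG finite_subset[of Z "carrier G"] Zc by blast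

lemma block: assumes X: "X \<in> nccc_vertices G"
  shows "card (conj_class G (rep X)) * card {Y \<in> nccc_vertices G. cent (rep Y) = cent (rep X)}
       = card (cent (rep X)) - card Z"
proof -
  define x where "x = rep X"
  note rx = V_rep[OF X, folded x_def]
  define Cx where "Cx = cent x - Z"
  have B: "{Y \<in> nccc_vertices G. cent (rep Y) = cent x} = conj_class G ` Cx"
  proof
    show "{Y \<in> nccc_vertices G. cent (rep Y) = cent x} \<subseteq> conj_class G ` Cx"
    proof
      fix Y assume "Y \<in> {Y \<in> nccc_vertices G. cent (rep Y) = cent x}"
      hence Y: "Y \<in> nccc_vertices G" and e: "cent (rep Y) = cent x" by auto
      note ry = V_rep[OF Y]
      have "rep Y \<in> Cx" using cent_self[OF ry(1)] e ry(2) unfolding Cx_def by auto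
      thus "Y \<in> conj_class G ` Cx" using ry(3) by blast
    qed
    show "conj_class G ` Cx \<subseteq> {Y \<in> nccc_vertices G. cent (rep Y) = cent x}"
    proof
      fix Y assume "Y \<in> conj_class G ` Cx"
      then obtain y where y: "y \<in> Cx" and Yy: "Y = conj_class G y" by blast
      have yc: "y \<in> carrier G" "y \<notin> Z" "x \<otimes> y = y \<otimes> x" using y unfolding Cx_def cent_def by auto
      have YV: "Y \<in> nccc_vertices G" unfolding nccc_vertices_def using Yy yc by blast
      have "rep Y \<in> conj_class G y" using V_rep[OF YV] Yy class_self[OF yc(1)] unfolding rep_def by (metis someI_ex)
      hence "cent (rep Y) = cent y" using class_nc[OF yc(1) yc(2)] by blast
      also have "\<dots> = cent x" using cent_eq_set[OF rx(1) rx(2) yc(1) yc(2) yc(3)] .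
      finally show "Y \<in> {Y \<in> nccc_vertices G. cent (rep Y) = cent x}" using YV by simp
    qed
  qed
  have U: "\<Union> (conj_class G ` Cx) = Cx"
  proof
    show "\<Union> (conj_class G ` Cx) \<subseteq> Cx"
    proof
      fix w assume "w \<in> \<Union> (conj_class G ` Cx)"
      then obtain y where y: "y \<in> Cx" and w: "w \<in> conj_class G y" by blast
      have yc: "y \<in> carrier G" "y \<notin> Z" "x \<otimes> y = y \<otimes> x" using y unfolding Cx_def cent_def by auto
      note nw = class_nc[OF yc(1) yc(2) w]
      have "cent w = cent x" using nw(4) cent_eq_set[OF rx(1) rx(2) yc(1) yc(2) yc(3)] by simp
      thus "w \<in> Cx" using cent_self[OF nw(1)] nw(2) unfolding Cx_def by auto
    qed
    show "Cx \<subseteq> \<Union> (conj_class G ` Cx)"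
      using class_self unfolding Cx_def cent_def by blast
  qed
  have finC: "finite (cent x)" using finG unfolding cent_def by simp
  have cpos: "card (cent x) > 0" using finC cent_self[OF rx(1)] card_gt_0_iff by blast
  have sz: "card (conj_class G y) = card (conj_class G x)" if y: "y \<in> Cx" for y
  proof -
    have yc: "y \<in> carrier G" "y \<notin> Z" "x \<otimes> y = y \<otimes> x" using y unfolding Cx_def cent_def by auto
    have "card (conj_class G y) * card (cent x) = card (conj_class G x) * card (cent x)"
      using class_size[OF yc(1)] class_size[OF rx(1)] cent_eq_set[OF rx(1) rx(2) yc(1) yc(2) yc(3)] by simp
    thus ?thesis using cpos by simp
  qed
  have fin2: "finite (\<Union> (conj_class G ` Cx))" using U finC unfolding Cx_def by simp
  have fin1: "finite (conj_class G ` Cx)" using finC unfolding Cx_def by simp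
  have "card (conj_class G x) * card (conj_class G ` Cx) = card (\<Union> (conj_class G ` Cx))"
  proof (rule card_partition[OF fin1 fin2])
    show "\<And>c. c \<in> conj_class G ` Cx \<Longrightarrow> card c = card (conj_class G x)" using sz by blast
    show "\<And>c1 c2. c1 \<in> conj_class G ` Cx \<Longrightarrow> c2 \<in> conj_class G ` Cx \<Longrightarrow> c1 \<noteq> c2 \<Longrightarrow> c1 \<inter> c2 = {}"
      using class_disj unfolding Cx_def cent_def by blast
  qed
  also have "\<dots> = card Cx" using U by simp
  also have "\<dots> = card (cent x) - card Z"
  proof -
    have "Z \<subseteq> cent x" unfolding cent_def using Zc Zcomm' rx(1) by auto
    thus ?thesis unfolding Cx_def using finZ by (simp add: card_Diff_subset)
  qed
  finally show ?thesis using B unfolding x_def by simp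
qed

end

theorem theorem4p1:
  fixes G :: "('a, 'b) monoid_scheme" and p :: nat
  assumes "group G" and "finite (carrier G)" and "\<not> comm_group G"
    and "prime p"
    and "G Mod (grp_center G) \<cong> (integer_mod_group p \<times>\<times> integer_mod_group p)"
  shows "\<not> hyperenergetic (nccc_vertices G) (nccc_adj G)
       \<and> \<not> L_hyperenergetic (nccc_vertices G) (nccc_adj G)
       \<and> \<not> Q_hyperenergetic (nccc_vertices G) (nccc_adj G)"
proof -
  obtain \<phi> where phi: "\<phi> \<in> iso (G Mod (grp_center G)) (integer_mod_group p \<times>\<times> integer_mod_group p)"
    using assms(5) unfolding is_iso_def by blast
  interpret nc G p \<phi> using assms(1,2,4) phi by (simp add: nc_def nc_axioms_def)
  define V where "V = nccc_vertices G"
  define N0 where "N0 = p * card Z"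
  define S where "S = card (carrier G) div N0"
  define m where "m = (N0 - card Z) div S"
  have Zpos: "card Z > 0" using finZ subgroup.one_closed[OF Zsub] card_gt_0_iff by blast
  have N0pos: "N0 > 0" unfolding N0_def using p0 Zpos by simp
  have blkm: "\<forall>X\<in>V. card {Y\<in>V. cent (rep Y) = cent (rep X)} = m"
  proof
    fix X assume X: "X \<in> V"
    note rx = V_rep[OF X[unfolded V_def]]
    have cc: "card (cent (rep X)) = N0" unfolding N0_def using cent_card[OF rx(1) rx(2)] .
    have "card (conj_class G (rep X)) * N0 = card (carrier G)" using class_size[OF rx(1)] cc by simp
    hence cs: "card (conj_class G (rep X)) = S" unfolding S_def using N0pos by (metis div_mult_self_is_m)
    have Spos: "S > 0"
    proof (rule ccontr)
      assume "\<not> S > 0"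
      hence "card (carrier G) = 0" using cs \<open>card (conj_class G (rep X)) * N0 = card (carrier G)\<close> by simp
      thus False using finG rx(1) by auto
    qed
    have "S * card {Y\<in>V. cent (rep Y) = cent (rep X)} = N0 - card Z"
      using block[OF X[unfolded V_def]] cs cc unfolding V_def by simp
    thus "card {Y\<in>V. cent (rep Y) = cent (rep X)} = m" unfolding m_def using Spos
      by (metis nonzero_mult_div_cancel_left not_gr0)
  qed
  have adj: "\<forall>X\<in>V. \<forall>Y\<in>V. nccc_adj G X Y \<longleftrightarrow> cent (rep X) \<noteq> cent (rep Y)"
    using adj_iff unfolding V_def by blast
  have finV: "finite V"
  proof -
    have "V \<subseteq> Pow (carrier G)" unfolding V_def nccc_vertices_def using class_carrier by auto
    thus ?thesis using finG by (simp add: finite_subset)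
  qed
  have Vne: "V \<noteq> {}"
  proof
    assume V0: "V = {}"
    have "\<forall>x\<in>carrier G. x \<in> Z"
    proof
      fix x assume x: "x \<in> carrier G"
      show "x \<in> Z"
      proof (rule ccontr)
        assume "x \<notin> Z"
        hence "conj_class G x \<in> V" unfolding V_def nccc_vertices_def using x by blast
        thus False using V0 by simp
      qed
    qed
    hence "comm_group G" using Zcomm by (intro group_comm_groupI) auto
    thus False using assms(3) by simp
  qed
  show ?thesis using graph_main[OF finV Vne blkm adj] unfolding V_def .
qed

end
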